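(* Let $N\ge 2$, let $\alpha\in[0,\infty)$ and let $m=\lfloor N^{\alpha}\rfloor$. Consider the quantum walk on the graph $K_N\wedge_{v^*}S_m$ with time evolution operator $U$, initial state $\psi_0$ and success probability $p_t(v^* )$ as described in the context. Then for sufficiently large $N$ and any $\alpha\in[0,\infty)$ there exists a time $t_{\mathrm{opt}}=t_{\mathrm{opt}}(N)\in\mathbb{N}$ such that $$p_{t_{\mathrm{opt}}}(v^* )=\frac12+o(1)\qquad (N\to\infty).$$
   Context: $K_N$ is the complete graph on $N$ vertices and $S_m$ is the star graph (a tree with one center vertex and $m$ leaves). The graph $K_N\wedge_{v^*}S_m$ is obtained from the disjoint union of $K_N$ and $S_m$ by identifying one fixed vertex of $K_N$ with the center of $S_m$; the identified vertex is denoted $v^*$ (so $\deg(v^* )=N-1+m$). Let $V_S$ denote the set of the $m$ leaves of the star. Let $A$ be the set of symmetric arcs (each edge gives two opposite arcs); for an arc $a$, $o(a)$ and $t(a)$ are its origin and terminus, $\bar a$ is its inverse arc, and $\deg(v)=|\{a\in A: t(a)=v\}|$. The time evolution operator $U$ on $\mathbb{C}^A$ is $U=S(2d^*d-I)$, where $(S\psi)(a)=\psi(\bar a)$ and $d:\mathbb{C}^A\to\mathbb{C}^V$ is given by $(d\psi)(v)=\deg(v)^{-1/2}\sum_{a:t(a)=v}\psi(a)$ for $v\notin V_S$ and $(d\psi)(v)=0$ for $v\in V_S$. Explicitly, for $\psi\in\mathbb{C}^A$ and $a\in A$: $(U\psi)(a)=-\psi(\bar a)+\frac{2}{\deg(t(a))}\sum_{b\in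 A:\,o(b)=t(a)}\psi(b)$ if $t(a)\notin V_S$, and $(U\psi)(a)=-\psi(\bar a)$ if $t(a)\in V_S$ (phase reversal at the leaves). The initial state is $\psi_0(a)=1/\sqrt{N(N-1)}$ for $a\in A(K_N)$ and $\psi_0(a)=0$ otherwise, and $\psi_t=U^t\psi_0$. The probability of finding vertex $v$ at time $t$ is $p_t(v)=\sum_{a\in A:\,t(a)=v}|\psi_t(a)|^2$. *)

theory Defs
  imports "HOL-Analysis.Analysis"
begin

text \<open>The graph K_N wedge S_m on vertex set {0..<N+m}: vertices 0..N-1 form K_N,
  vertex 0 is v*, vertices N..N+m-1 are the m leaves of the star (centre v* = 0).
  An arc is a pair (o(a), t(a)); the inverse arc of (u,v) is (v,u).\<close>

definition adj :: "nat \<Rightarrow> nat \<Rightarrow> nat \<Rightarrow> nat \<Rightarrow> bool" where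
  "adj N m u v \<longleftrightarrow> u \<noteq> v \<and>
     ((u < N \<and> v < N) \<or> (u = 0 \<and> N \<le> v \<and> v < N + m) \<or> (v = 0 \<and> N \<le> u \<and> u < N + m))"

definition arcs :: "nat \<Rightarrow> nat \<Rightarrow> (nat \<times> nat) set" where
  "arcs N m = {(u, v). adj N m u v}"

definition leaves :: "nat \<Rightarrow> nat \<Rightarrow> nat set" where
  "leaves N m = {N..<N + m}"

definition vstar :: nat where "vstar = 0"

definition deg :: "nat \<Rightarrow> nat \<Rightarrow> nat \<Rightarrow> nat" where
  "deg N m v = card {a \<in> arcs N m. snd a = v}"

text \<open>Time evolution operator U on C^A (functions outside A are set to 0).\<close>
definition Uop :: "nat \<Rightarrow> nat \<Rightarrow> (nat \<times> nat \<Rightarrow> complex) \<Rightarrow> (nat \<times> nat \<Rightarrow> complex)" where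
  "Uop N m \<psi> a =
     (if a \<in> arcs N m then
        (if snd a \<in> leaves N m then - \<psi> (snd a, fst a)
         else - \<psi> (snd a, fst a)
              + (2 / of_nat (deg N m (snd a))) * (\<Sum>b\<in>{b \<in> arcs N m. fst b = snd a}. \<psi> b))
      else 0)"

definition psi0 :: "nat \<Rightarrow> nat \<Rightarrow> (nat \<times> nat \<Rightarrow> complex)" where
  "psi0 N m a = (if a \<in> arcs N m \<and> fst a < N \<and> snd a < N
                 then complex_of_real (1 / sqrt (real N * (real N - 1))) else 0)"

definition psi :: "nat \<Rightarrow> nat \<Rightarrow> nat \<Rightarrow> (nat \<times> nat \<Rightarrow> complex)" where
  "psi N m t = (Uop N m ^^ t) (psi0 N m)"

definition prob :: "nat \<Rightarrow> nat \<Rightarrow> nat \<Rightarrow> nat \<Rightarrow> real" where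
  "prob N m t v = (\<Sum>a\<in>{a \<in> arcs N m. snd a = v}. (cmod (psi N m t a))\<^sup>2)"

end

theory Submission
  imports Defs "HOL-Real_Asymp.Real_Asymp"
begin


type_synonym v5 = "real \<times> real \<times> real \<times> real \<times> real"

definition stp :: "real \<Rightarrow> real \<Rightarrow> v5 \<Rightarrow> v5" where
  "stp M m v = (case v of (A,B,C,D,E) \<Rightarrow>
     (-B + 2*(M*B+m*D)/(M+m), -A + 2*(A+(M-1)*C)/M, -C + 2*(A+(M-1)*C)/M, -E,
      -D + 2*(M*B+m*D)/(M+m)))"

definition valf :: "nat \<Rightarrow> nat \<Rightarrow> v5 \<Rightarrow> nat \<times> nat \<Rightarrow> real" where
  "valf N m v a = (case v of (A,B,C,D,E) \<Rightarrow>
     (if adj N m (fst a) (snd a) then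
        (if snd a = 0 then (if fst a < N then A else E)
         else if fst a = 0 then (if snd a < N then B else D) else C) else 0))"

definition st :: "nat \<Rightarrow> nat \<Rightarrow> nat \<Rightarrow> v5" where
  "st N m t = (stp (real N - 1) (real m) ^^ t)
     (1 / sqrt (real N * (real N - 1)), 1 / sqrt (real N * (real N - 1)), 1 / sqrt (real N * (real N - 1)), 0, 0)"

lemma adj_sym: "adj N m u v = adj N m v u"
  unfolding adj_def by auto

lemma out_arcs: "{b \<in> arcs N m. fst b = w} = (\<lambda>x. (w,x)) ` {x. adj N m w x}"
  unfolding arcs_def by auto

lemma in_arcs: "{b \<in> arcs N m. snd b = w} = (\<lambda>x. (x,w)) ` {x. adj N m x w}"
  unfolding arcs_def by auto

lemma nb0: "N \<ge> 1 \<Longrightarrow> {x. adj N m 0 x} = {1..<N+m}"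
  unfolding adj_def by auto

lemma nb0': "N \<ge> 1 \<Longrightarrow> {x. adj N m x 0} = {1..<N+m}"
  unfolding adj_def by auto

lemma nbw: "0 < w \<Longrightarrow> w < N \<Longrightarrow> {x. adj N m w x} = {0..<N} - {w}"
  unfolding adj_def by auto

lemma nbw': "0 < w \<Longrightarrow> w < N \<Longrightarrow> {x. adj N m x w} = {0..<N} - {w}"
  unfolding adj_def by auto

lemma sum_out: "(\<Sum>b\<in>{b \<in> arcs N m. fst b = w}. f b) = (\<Sum>x\<in>{x. adj N m w x}. f (w,x))"
  unfolding out_arcs by (subst sum.reindex) (auto simp: inj_on_def)

lemma sum_in: "(\<Sum>b\<in>{b \<in> arcs N m. snd b = w}. f b) = (\<Sum>x\<in>{x. adj N m x w}. f (x,w))"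
  unfolding in_arcs by (subst sum.reindex) (auto simp: inj_on_def)

lemma deg_eq: "deg N m w = card {x. adj N m x w}"
  unfolding deg_def in_arcs by (subst card_image) (auto simp: inj_on_def)

lemma deg0: "N \<ge> 1 \<Longrightarrow> deg N m 0 = N - 1 + m"
  using nb0'[of N m] by (simp add: deg_eq)

lemma degw: "0 < w \<Longrightarrow> w < N \<Longrightarrow> deg N m w = N - 1"
  using nbw'[of w N m] by (simp add: deg_eq)

lemma split_range: fixes N m :: nat shows "N \<ge> 1 \<Longrightarrow> (\<Sum>x\<in>{1..<N+m}. f x) = (\<Sum>x\<in>{1..<N}. f x) + (\<Sum>x\<in>{N..<N+m}. f x)"
  using sum.atLeastLessThan_concat[of 1 N "N+m" f] by simp

lemma sum_out0:
  assumes "N \<ge> 2"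
  shows "(\<Sum>x\<in>{x. adj N m 0 x}. g (valf N m (A,B,C,D,E) (0,x))) = of_nat (N - 1) * g B + of_nat m * g D"
proof -
  have "(\<Sum>x\<in>{x. adj N m 0 x}. g (valf N m (A,B,C,D,E) (0,x)))
      = (\<Sum>x\<in>{1..<N}. g (valf N m (A,B,C,D,E) (0,x))) + (\<Sum>x\<in>{N..<N+m}. g (valf N m (A,B,C,D,E) (0,x)))"
    using assms split_range[of N "\<lambda>x. g (valf N m (A,B,C,D,E) (0,x))" m] by (simp add: nb0)
  also have "(\<Sum>x\<in>{1..<N}. g (valf N m (A,B,C,D,E) (0,x))) = (\<Sum>x\<in>{1..<N}. g B)"
    by (rule sum.cong) (auto simp: valf_def adj_def)
  also have "(\<Sum>x\<in>{N..<N+m}. g (valf N m (A,B,C,D,E) (0,x))) = (\<Sum>x\<in>{N..<N+m}. g D)"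
    by (rule sum.cong) (use assms in \<open>auto simp: valf_def adj_def\<close>)
  finally show ?thesis by simp
qed

lemma sum_outw:
  assumes "0 < w" "w < N"
  shows "(\<Sum>x\<in>{x. adj N m w x}. g (valf N m (A,B,C,D,E) (w,x))) = g A + of_nat (N - 2) * g C"
proof -
  have e: "{0..<N} - {w} = insert 0 ({1..<N} - {w})" using assms by auto
  have "(\<Sum>x\<in>{x. adj N m w x}. g (valf N m (A,B,C,D,E) (w,x)))
      = g (valf N m (A,B,C,D,E) (w,0)) + (\<Sum>x\<in>{1..<N} - {w}. g (valf N m (A,B,C,D,E) (w,x)))"
    using assms by (simp add: nbw e)
  also have "g (valf N m (A,B,C,D,E) (w,0)) = g A" using assms by (simp add: valf_def adj_def)
  also have "(\<Sum>x\<in>{1..<N} - {w}. g (valf N m (A,B,C,D,E) (w,x))) = (\<Sum>x\<in>{1..<N} - {w}. g C)"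
    by (rule sum.cong) (use assms in \<open>auto simp: valf_def adj_def\<close>)
  also have "(\<Sum>x\<in>{1..<N} - {w}. g C) = of_nat (N - 2) * g C" using assms by (simp add: numeral_2_eq_2)
  finally show ?thesis by simp
qed

lemma Uop_valf:
  assumes N: "N \<ge> 2"
  shows "Uop N m (\<lambda>a. complex_of_real (valf N m v a)) a
       = complex_of_real (valf N m (stp (real N - 1) (real m) v) a)"
proof -
  obtain A B C D E where v: "v = (A,B,C,D,E)" by (cases v) auto
  obtain u w where a: "a = (u,w)" by (cases a) auto
  have rN: "real (N - 1) = real N - 1" "real (N - 2) = real N - 2" using N by auto
  show ?thesis
  proof (cases "adj N m u w")
    case False
    then show ?thesis by (simp add: Uop_def arcs_def valf_def a v)
  next
    case adj: True
    hence arc: "a \<in> arcs N m" by (simp add: arcs_def a)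
    consider (leaf) "N \<le> w" | (zero) "w = 0" | (mid) "0 < w" "w < N" by linarith
    then show ?thesis
    proof cases
      case leaf
      have u0: "u = 0" and wl: "w < N + m" using adj leaf N unfolding adj_def by auto
      have "w \<in> leaves N m" using leaf wl by (simp add: leaves_def)
      moreover have "valf N m v (w,u) = E" using adj leaf u0 N by (simp add: valf_def v adj_sym)
      moreover have "valf N m (stp (real N - 1) (real m) v) (u,w) = - E"
        using adj leaf u0 N by (simp add: valf_def v stp_def)
      ultimately show ?thesis using arc by (simp add: Uop_def a)
    next
      case zero
      have u1: "1 \<le> u" "u < N + m" using adj zero N unfolding adj_def by auto
      have deg: "deg N m w = N - 1 + m" using zero N by (simp add: deg0)
      have sm: "(\<Sum>b\<in>{b \<in> arcs N m. fst b = snd a}. complex_of_real (valf N m v b))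
          = of_real ((real N - 1) * B + real m * D)"
        using sum_out0[of N "complex_of_real" m A B C D E] N zero
        by (simp add: sum_out a v rN)
      have dg: "(of_nat (deg N m (snd a)) :: complex) = of_real (real N - 1 + real m)"
        using deg N by (simp add: a rN)
      have ww: "snd a \<notin> leaves N m" using zero N by (simp add: a leaves_def)
      have "Uop N m (\<lambda>a. complex_of_real (valf N m v a)) a
          = of_real (- valf N m v (w,u) + 2 / (real N - 1 + real m) * ((real N - 1) * B + real m * D))"
        unfolding Uop_def using arc ww sm dg by (simp add: a)
      moreover have "valf N m v (w,u) = (if u < N then B else D)"
        using adj zero u1 N by (simp add: valf_def v adj_sym)
      moreover have "valf N m (stp (real N - 1) (real m) v) (u,w)
          = (if u < N then -B + 2*((real N - 1)*B + real m*D)/((real N - 1) + real m)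
             else -D + 2*((real N - 1)*B + real m*D)/((real N - 1) + real m))"
        using adj zero u1 N by (simp add: valf_def v stp_def)
      ultimately show ?thesis by (simp add: a)
    next
      case mid
      have u1: "u < N" "u \<noteq> w" using adj mid unfolding adj_def by auto
      have deg: "deg N m w = N - 1" using mid by (simp add: degw)
      have sm: "(\<Sum>b\<in>{b \<in> arcs N m. fst b = snd a}. complex_of_real (valf N m v b))
          = of_real (A + (real N - 2) * C)"
        using sum_outw[of w N "complex_of_real" m A B C D E] mid
        by (simp add: sum_out a v rN)
      have dg: "(of_nat (deg N m (snd a)) :: complex) = of_real (real N - 1)"
        using deg N by (simp add: a rN)
      have ww: "snd a \<notin> leaves N m" using mid by (simp add: a leaves_def)
      have "Uop N m (\<lambda>a. complex_of_real (valf N m v a)) a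
          = of_real (- valf N m v (w,u) + 2 / (real N - 1) * (A + (real N - 2) * C))"
        unfolding Uop_def using arc ww sm dg by (simp add: a)
      moreover have "valf N m (stp (real N - 1) (real m) v) (u,w)
          = - valf N m v (w,u) + 2 / (real N - 1) * (A + (real N - 2) * C)"
        using adj mid u1 by (auto simp: valf_def v stp_def adj_sym)
      ultimately show ?thesis by (simp add: a)
    qed
  qed
qed

lemma psi_eq:
  assumes N: "N \<ge> 2"
  shows "psi N m t = (\<lambda>a. complex_of_real (valf N m (st N m t) a))"
proof (induction t)
  case 0
  show ?case
  proof
    fix a :: "nat \<times> nat"
    obtain u w where a: "a = (u,w)" by (cases a) auto
    show "psi N m 0 a = complex_of_real (valf N m (st N m 0) a)"
      using N by (auto simp: psi_def st_def psi0_def valf_def arcs_def adj_def a)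
  qed
next
  case (Suc t)
  have "psi N m (Suc t) = Uop N m (psi N m t)" by (simp add: psi_def)
  also have "\<dots> = (\<lambda>a. complex_of_real (valf N m (st N m (Suc t)) a))"
    unfolding Suc by (rule ext, subst Uop_valf[OF N]) (simp add: st_def)
  finally show ?case .
qed



lemma prob_eq:
  assumes N: "N \<ge> 2"
  shows "prob N m t 0 = (case st N m t of (A,B,C,D,E) \<Rightarrow> (real N - 1) * A^2 + real m * E^2)"
proof -
  obtain A B C D E where v: "st N m t = (A,B,C,D,E)" by (cases "st N m t") auto
  have "prob N m t 0 = (\<Sum>x\<in>{1..<N+m}. (cmod (complex_of_real (valf N m (A,B,C,D,E) (x,0))))\<^sup>2)"
    unfolding prob_def using N by (simp add: sum_in psi_eq v nb0')
  also have "\<dots> = (\<Sum>x\<in>{1..<N}. (cmod (complex_of_real (valf N m (A,B,C,D,E) (x,0))))\<^sup>2)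
     + (\<Sum>x\<in>{N..<N+m}. (cmod (complex_of_real (valf N m (A,B,C,D,E) (x,0))))\<^sup>2)"
    by (rule split_range) (use N in simp)
  also have "(\<Sum>x\<in>{1..<N}. (cmod (complex_of_real (valf N m (A,B,C,D,E) (x,0))))\<^sup>2) = (\<Sum>x\<in>{1..<N}. A^2)"
    by (rule sum.cong) (auto simp: valf_def adj_def)
  also have "(\<Sum>x\<in>{N..<N+m}. (cmod (complex_of_real (valf N m (A,B,C,D,E) (x,0))))\<^sup>2) = (\<Sum>x\<in>{N..<N+m}. E^2)"
    by (rule sum.cong) (use N in \<open>auto simp: valf_def adj_def\<close>)
  finally show ?thesis using N by (simp add: v)
qed

definition vlin :: "real \<Rightarrow> v5 \<Rightarrow> real \<Rightarrow> v5 \<Rightarrow> v5" where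
  "vlin a x b y = (case x of (x1,x2,x3,x4,x5) \<Rightarrow> case y of (y1,y2,y3,y4,y5) \<Rightarrow>
      (a*x1+b*y1, a*x2+b*y2, a*x3+b*y3, a*x4+b*y4, a*x5+b*y5))"

lemma stp_lin: "stp M m (vlin a x b y) = vlin a (stp M m x) b (stp M m y)"
  by (cases x; cases y) (simp add: stp_def vlin_def add_divide_distrib diff_divide_distrib algebra_simps)

lemma stp_pow_lin: "(stp M m ^^ t) (vlin a x b y) = vlin a ((stp M m ^^ t) x) b ((stp M m ^^ t) y)"
  by (induction t) (simp_all add: stp_lin)

definition nrm :: "real \<Rightarrow> real \<Rightarrow> v5 \<Rightarrow> real" where
  "nrm M m v = (case v of (A,B,C,D,E) \<Rightarrow> M*A^2 + M*B^2 + M*(M-1)*C^2 + m*D^2 + m*E^2)"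

definition wv :: "real \<Rightarrow> real \<Rightarrow> v5 \<Rightarrow> complex" where
  "wv M m v = (case v of (A,B,C,D,E) \<Rightarrow> Complex (sqrt M * A) (sqrt m * E))"

lemma wv_lin: "wv M m (vlin a x b y) = of_real a * wv M m x + of_real b * wv M m y"
  by (cases x; cases y) (simp add: wv_def vlin_def complex_eq_iff algebra_simps)

lemma cmod_wv: "M \<ge> 0 \<Longrightarrow> m \<ge> 0 \<Longrightarrow> cmod (wv M m v) = (case v of (A,B,C,D,E) \<Rightarrow> sqrt (M*A^2 + m*E^2))"
  by (cases v) (simp add: wv_def cmod_def power_mult_distrib)

lemma wv_le: "M \<ge> 1 \<Longrightarrow> m \<ge> 0 \<Longrightarrow> cmod (wv M m v) \<le> sqrt (nrm M m v)"
proof -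
  assume a: "M \<ge> 1" "m \<ge> 0"
  obtain A B C D E where v: "v = (A,B,C,D,E)" by (cases v) auto
  have "M*A^2 + m*E^2 \<le> nrm M m v"
    using a by (simp add: nrm_def v)
  then show ?thesis using a by (simp add: cmod_wv v)
qed

lemma nrm_stp: "M > 0 \<Longrightarrow> M + m > 0 \<Longrightarrow> nrm M m (stp M m v) = nrm M m v"
proof -
  assume a: "M > 0" "M + m > 0"
  obtain A B C D E where v: "v = (A,B,C,D,E)" by (cases v) auto
  have K: "M + m \<noteq> 0" using a by simp
  define x where "x = 2*(M*B+m*D)/(M+m)"
  define y where "y = 2*(A+(M-1)*C)/M"
  have x: "x*(M+m) = 2*(M*B+m*D)" using K by (simp add: x_def)
  have y: "y*M = 2*(A+(M-1)*C)" using a by (simp add: y_def)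
  have "stp M m v = (-B + x, -A + y, -C + y, -E, -D + x)"
    by (simp add: stp_def v x_def y_def)
  moreover have "M*(-B + x)^2 + M*(-A + y)^2 + M*(M-1)*(-C + y)^2 + m*(-E)^2 + m*(-D + x)^2
     = M*A^2 + M*B^2 + M*(M-1)*C^2 + m*D^2 + m*E^2"
    using x y by algebra
  ultimately show ?thesis by (simp add: nrm_def v)
qed

lemma nrm_pow: "M > 0 \<Longrightarrow> M + m > 0 \<Longrightarrow> nrm M m ((stp M m ^^ t) v) = nrm M m v"
  by (induction t) (simp_all add: nrm_stp)

lemma mode:
  assumes "stp M m uR = vlin (cos th) uR (- sin th) uI" "stp M m uI = vlin (sin th) uR (cos th) uI"
  shows "(stp M m ^^ t) uR = vlin (cos (t*th)) uR (- sin (t*th)) uI"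
proof (induction t)
  case 0
  then show ?case by (cases uR; cases uI) (simp add: vlin_def)
next
  case (Suc t)
  have "(stp M m ^^ Suc t) uR = stp M m (vlin (cos (t*th)) uR (- sin (t*th)) uI)"
    using Suc by simp
  also have "\<dots> = vlin (cos (t*th)) (vlin (cos th) uR (- sin th) uI) (- sin (t*th)) (vlin (sin th) uR (cos th) uI)"
    by (simp add: stp_lin assms)
  also have "\<dots> = vlin (cos (Suc t*th)) uR (- sin (Suc t*th)) uI"
    by (cases uR; cases uI) (simp add: vlin_def distrib_right cos_add sin_add algebra_simps)
  finally show ?case .
qed



definition kap :: "real \<Rightarrow> real \<Rightarrow> real" where
  "kap M m = ((1 + 1/M) - sqrt ((1 - 1/M)^2 + 4/(M+m))) / 2"

lemma kap_props:
  assumes M: "M \<ge> 2" and m: "m \<ge> 1"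
  shows "(M+m)*(1 - kap M m)*(1 - M * kap M m) = M" "0 < kap M m" "kap M m < 1/M"
proof -
  define S where "S = sqrt ((1 - 1/M)^2 + 4/(M+m))"
  define k where "k = kap M m"
  have k: "k = ((1 + 1/M) - S)/2" by (simp add: k_def kap_def S_def)
  have "0 \<le> 4/(M+m)" using M m by simp
  hence nn: "0 \<le> (1 - 1/M)^2 + 4/(M+m)" using zero_le_power2[of "1 - 1/M"] by linarith
  have S2: "S^2 = (1 - 1/M)^2 + 4/(M+m)" unfolding S_def
    using real_sqrt_pow2[OF nn] .
  have KM: "M + m \<noteq> 0" "M \<noteq> 0" "M*M + M*m \<noteq> 0" using M m by (auto, smt (verit) mult_pos_pos)
  have S0: "S \<ge> 0" unfolding S_def using nn by simp
  define uu where "uu = 1/M"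
  define vv where "vv = 1/(M+m)"
  have Mu: "M*uu = 1" and Kv: "(M+m) * vv = 1" using KM by (auto simp: uu_def vv_def)
  have S2': "S^2 = (1-uu)^2 + 4 * vv" using S2 by (simp add: uu_def vv_def)
  have k': "2*k = 1 + uu - S" using k by (simp add: uu_def)
  have q: "k^2 - (1+uu)*k + (uu - vv) = 0" using S2' k' by algebra
  show rel: "(M+m)*(1 - kap M m)*(1 - M * kap M m) = M"
    unfolding k_def[symmetric] using q Mu Kv by algebra
  have vu: "vv < uu" using M m by (simp add: uu_def vv_def frac_less2)
  have lt: "(1-uu)^2 + 4 * vv < (1 + uu)^2"
    using vu by (simp add: power2_eq_square algebra_simps)
  have "S < 1 + uu"
  proof -
    have "S < sqrt ((1 + uu)^2)" unfolding S_def using lt S2' nn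
      by (simp only: real_sqrt_less_iff uu_def vv_def)
    thus ?thesis using M by (simp add: uu_def)
  qed
  hence "0 < k" using k' by simp
  thus k0: "0 < kap M m" by (simp add: k_def)
  have "1/M - 1 < 0" using M by simp
  hence "k < 1" using k S0 by (simp add: field_simps)
  have "(M+m)*(1-k)*(1-M*k) > 0" using rel M by (simp add: k_def)
  hence "1 - M*k > 0" using \<open>k < 1\<close> M m
    by (metis mult_pos_pos diff_gt_0_iff_gt less_trans mult_less_0_iff add_pos_pos zero_less_mult_pos
        order_less_le_trans one_le_numeral zero_less_one not_less)
  thus "kap M m < 1/M" using M by (simp add: k_def field_simps)
qed

lemma alg:
  fixes M m k s d2 :: real
  assumes M: "M > 0" and m: "m > 0" and rel: "(M+m)*(1-k)*(1-M*k) = M" and k0: "k \<noteq> 0"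
    and ss: "s^2 = k*(2-k)" and d2: "k*d2 = s*((1-M*k)/2)"
  shows "-(1-M*k/2) + 2*(M*(1-M*k/2) + m*((1-M*k)/2))/(M+m) = (1-k)*(1-M*k/2) + (- s)*(M* s/2)"
    "-(1-M*k/2) + 2*((1-M*k/2) + (M-1)*1)/M = (1-k)*(1-M*k/2) + (- s)*(-(M* s/2))"
    "-1 + 2*((1-M*k/2) + (M-1)*1)/M = (1-k)*1 + (- s)*0"
    "-((1-M*k)/2) = (1-k)*((1-M*k)/2) + (- s)*d2"
    "-((1-M*k)/2) + 2*(M*(1-M*k/2) + m*((1-M*k)/2))/(M+m) = (1-k)*((1-M*k)/2) + (- s)*(-d2)"
    "-(-(M* s/2)) + 2*(M*(-(M* s/2)) + m*d2)/(M+m) = s*(1-M*k/2) + (1-k)*(M* s/2)"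
    "-(M* s/2) + 2*((M* s/2) + (M-1)*0)/M = s*(1-M*k/2) + (1-k)*(-(M* s/2))"
    "-0 + 2*((M* s/2) + (M-1)*0)/M = s*1 + (1-k)*0"
    "-(-d2) = s*((1-M*k)/2) + (1-k)*d2"
    "-d2 + 2*(M*(-(M* s/2)) + m*d2)/(M+m) = s*((1-M*k)/2) + (1-k)*(-d2)"
    "M*(M* s/2)^2 + m*d2^2 = (2*M*(1-M*k/2)^2 + M*(M-1) + 2*m*((1-M*k)/2)^2)/2"
proof -
  have K: "M+m \<noteq> 0" using M m by simp
  show "-(1-M*k/2) + 2*(M*(1-M*k/2) + m*((1-M*k)/2))/(M+m) = (1-k)*(1-M*k/2) + (- s)*(M* s/2)"
    using K rel ss by (simp add: field_simps power2_eq_square) algebra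
  show "-(1-M*k/2) + 2*((1-M*k/2) + (M-1)*1)/M = (1-k)*(1-M*k/2) + (- s)*(-(M* s/2))"
    using M ss by (simp add: field_simps power2_eq_square) algebra
  show "-1 + 2*((1-M*k/2) + (M-1)*1)/M = (1-k)*1 + (- s)*0"
    using M by (simp add: field_simps)
  show "-((1-M*k)/2) = (1-k)*((1-M*k)/2) + (- s)*d2"
  proof -
    have "k*(-((1-M*k)/2)) = k*((1-k)*((1-M*k)/2) + (- s)*d2)"
      using ss d2 by (simp add: field_simps power2_eq_square) algebra
    thus ?thesis by (rule mult_left_cancel[OF k0, THEN iffD1])
  qed
  show "-((1-M*k)/2) + 2*(M*(1-M*k/2) + m*((1-M*k)/2))/(M+m) = (1-k)*((1-M*k)/2) + (- s)*(-d2)"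
  proof -
    have "k*(-((1-M*k)/2) + 2*(M*(1-M*k/2) + m*((1-M*k)/2))/(M+m)) = k*((1-k)*((1-M*k)/2) + (- s)*(-d2))"
      using K rel ss d2 by (simp add: field_simps power2_eq_square) algebra
    thus ?thesis by (rule mult_left_cancel[OF k0, THEN iffD1])
  qed
  show "-(-(M* s/2)) + 2*(M*(-(M* s/2)) + m*d2)/(M+m) = s*(1-M*k/2) + (1-k)*(M* s/2)"
  proof -
    have "k*(-(-(M* s/2)) + 2*(M*(-(M* s/2)) + m*d2)/(M+m)) = k*(s*(1-M*k/2) + (1-k)*(M* s/2))"
      using K rel ss d2 by (simp add: field_simps power2_eq_square) algebra
    thus ?thesis by (rule mult_left_cancel[OF k0, THEN iffD1])
  qed
  show "-(M* s/2) + 2*((M* s/2) + (M-1)*0)/M = s*(1-M*k/2) + (1-k)*(-(M* s/2))"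
    using M by (simp add: field_simps)
  show "-0 + 2*((M* s/2) + (M-1)*0)/M = s*1 + (1-k)*0" using M by simp
  show "-(-d2) = s*((1-M*k)/2) + (1-k)*d2"
    using d2 by (simp add: algebra_simps)
  show "-d2 + 2*(M*(-(M* s/2)) + m*d2)/(M+m) = s*((1-M*k)/2) + (1-k)*(-d2)"
  proof -
    have "k*(-d2 + 2*(M*(-(M* s/2)) + m*d2)/(M+m)) = k*(s*((1-M*k)/2) + (1-k)*(-d2))"
      using K rel ss d2 by (simp add: field_simps power2_eq_square) algebra
    thus ?thesis by (rule mult_left_cancel[OF k0, THEN iffD1])
  qed
  show "M*(M* s/2)^2 + m*d2^2 = (2*M*(1-M*k/2)^2 + M*(M-1) + 2*m*((1-M*k)/2)^2)/2"
  proof -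
    have "k^2*(M*(M* s/2)^2 + m*d2^2) = k^2*((2*M*(1-M*k/2)^2 + M*(M-1) + 2*m*((1-M*k)/2)^2)/2)"
      using K rel ss d2 by (simp add: field_simps power2_eq_square) algebra
    thus ?thesis using k0 by simp
  qed
qed

definition th :: "real \<Rightarrow> real \<Rightarrow> real" where
  "th M m = arccos (1 - kap M m)"

definition uR :: "real \<Rightarrow> real \<Rightarrow> v5" where
  "uR M m = (1 - M*kap M m/2, 1 - M*kap M m/2, 1, (1-M*kap M m)/2, (1-M*kap M m)/2)"

definition d2 :: "real \<Rightarrow> real \<Rightarrow> real" where
  "d2 M m = sin (th M m) * ((1 - M*kap M m)/2) / kap M m"

definition uI :: "real \<Rightarrow> real \<Rightarrow> v5" where
  "uI M m = (M* sin (th M m)/2, -(M* sin (th M m)/2), 0, d2 M m, - d2 M m)"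

lemma th_props:
  assumes M: "M \<ge> 2" and m: "m \<ge> 1"
  shows "cos (th M m) = 1 - kap M m" "(sin (th M m))^2 = kap M m * (2 - kap M m)"
    "0 < th M m" "th M m < pi/2" "0 \<le> sin (th M m)"
proof -
  note kp = kap_props[OF M m]
  have k1: "kap M m < 1/2" using kp(3) M by (smt (verit) divide_le_eq_1 frac_le le_divide_eq_1 zero_less_one)
  show "cos (th M m) = 1 - kap M m" unfolding th_def using kp k1 by simp
  show "(sin (th M m))^2 = kap M m * (2 - kap M m)" unfolding th_def using kp k1
    by (simp add: sin_arccos power2_eq_square algebra_simps)
  show a: "0 < th M m" unfolding th_def using kp k1 arccos_lt_bounded[of "1 - kap M m"] by simp
  show b: "th M m < pi/2" unfolding th_def using kp k1 arccos_less_arccos[of 0 "1 - kap M m"] by simp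
  show "0 \<le> sin (th M m)" using a b by (intro sin_ge_zero) auto
qed

lemma modes:
  assumes M: "M \<ge> 2" and m: "m \<ge> 1"
  shows "stp M m (uR M m) = vlin (cos (th M m)) (uR M m) (- sin (th M m)) (uI M m)"
        "stp M m (uI M m) = vlin (sin (th M m)) (uR M m) (cos (th M m)) (uI M m)"
        "M*(M* sin (th M m)/2)^2 + m*(d2 M m)^2 = nrm M m (uR M m) / 2"
proof -
  note kp = kap_props[OF M m]
  note tp = th_props[OF M m]
  have dd: "kap M m * d2 M m = sin (th M m) * ((1 - M*kap M m)/2)"
    using kp by (simp add: d2_def)
  note A = alg[of M m "kap M m" "sin (th M m)" "d2 M m", OF _ _ kp(1) _ tp(2) dd]
  have Mp: "M > 0" "m > 0" "kap M m \<noteq> 0" using M m kp by auto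
  note B = A[OF Mp(1) Mp(2) Mp(3)]
  show "stp M m (uR M m) = vlin (cos (th M m)) (uR M m) (- sin (th M m)) (uI M m)"
    unfolding stp_def vlin_def uR_def uI_def tp(1) prod.case
    using B(1-5) by simp
  show "stp M m (uI M m) = vlin (sin (th M m)) (uR M m) (cos (th M m)) (uI M m)"
    unfolding stp_def vlin_def uR_def uI_def tp(1) prod.case
    using B(6-10) by simp
  show "M*(M* sin (th M m)/2)^2 + m*(d2 M m)^2 = nrm M m (uR M m) / 2"
    unfolding nrm_def uR_def prod.case using B(11) by (simp add: algebra_simps)
qed



lemma time_bounds:
  assumes th0: "0 < tht" and th1: "tht < pi/2" and t: "t = nat \<lfloor>pi / (2*tht)\<rfloor>"
    and k: "cos tht = 1 - k"
  shows "\<bar>cos (real t * tht)\<bar> \<le> sin tht" "\<bar>1 - sin (real t * tht)\<bar> \<le> k"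
proof -
  have pos: "0 \<le> pi / (2*tht)" using th0 by simp
  have rt: "real t = of_int \<lfloor>pi / (2*tht)\<rfloor>" using pos t by simp
  have f1: "real t \<le> pi / (2*tht)" using rt by linarith
  have f2: "pi / (2*tht) < real t + 1" using rt by linarith
  have u1: "real t * tht \<le> pi/2"
  proof -
    have "real t * tht \<le> pi / (2*tht) * tht" by (rule mult_right_mono[OF f1]) (use th0 in simp)
    thus ?thesis using th0 by simp
  qed
  have u2: "pi/2 - tht < real t * tht"
  proof -
    have "pi / (2*tht) * tht < (real t + 1) * tht" by (rule mult_strict_right_mono[OF f2 th0])
    thus ?thesis using th0 by (simp add: algebra_simps)
  qed
  define x where "x = pi/2 - real t * tht"
  have x0: "0 \<le> x" and x1: "x < tht" using u1 u2 by (auto simp: x_def)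
  have cx: "cos (real t * tht) = sin x" by (simp add: x_def sin_cos_eq)
  have sx: "sin (real t * tht) = cos x" by (simp add: x_def cos_sin_eq)
  have "0 \<le> sin x" using x0 x1 th1 by (intro sin_ge_zero) auto
  moreover have "sin x \<le> sin tht" using x0 x1 th1 by (intro sin_monotone_2pi_le) auto
  ultimately show "\<bar>cos (real t * tht)\<bar> \<le> sin tht" using cx by simp
  have "cos tht \<le> cos x" using x0 x1 th1 by (intro cos_monotone_0_pi_le) auto
  moreover have "cos x \<le> 1" by simp
  ultimately show "\<bar>1 - sin (real t * tht)\<bar> \<le> k" using sx k by simp
qed

lemma main_est:
  fixes N mm :: nat
  assumes N3: "N \<ge> 3" and m1: "mm \<ge> 1"
  shows "\<bar>sqrt (prob N mm (nat \<lfloor>pi / (2 * th (real N - 1) (real mm))\<rfloor>) 0) - 1 / sqrt 2\<bar>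
          \<le> 10 / sqrt (real N - 1)"
proof -
  define M where "M = real N - 1"
  define m where "m = real mm"
  have M2: "M \<ge> 2" using N3 by (simp add: M_def)
  have m1': "m \<ge> 1" using m1 by (simp add: m_def)
  have MM: "M*M > 0" using M2 by simp
  have Mnz1: "M \<noteq> 0" "M + 1 \<noteq> 0" "M + M*M \<noteq> 0" "M*M + M \<noteq> 0"
    using M2 MM by linarith+
  have Mnz2: "(M+1)*M \<noteq> 0" using Mnz1 by simp
  note Mnz = Mnz1 Mnz2
  have Mpos: "0 < M" "0 < M + 1" using M2 by auto
  define k where "k = kap M m"
  note kp = kap_props[OF M2 m1', folded k_def]
  note tp = th_props[OF M2 m1', folded k_def]
  define tt where "tt = th M m"
  define si where "si = sin tt"
  define t where "t = nat \<lfloor>pi / (2 * tt)\<rfloor>"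
  define cc where "cc = cos (real t * tt)"
  define ss where "ss = sin (real t * tt)"
  have tb: "\<bar>cc\<bar> \<le> si" "\<bar>1 - ss\<bar> \<le> k"
    using time_bounds[OF tp(3) tp(4) _ tp(1)] by (simp_all add: cc_def ss_def si_def tt_def t_def)
  have si0: "0 \<le> si" using tp(5) by (simp add: si_def tt_def)
  have si2: "si^2 = k*(2-k)" using tp(2) by (simp add: si_def tt_def)
  define c0 where "c0 = 1 / sqrt (real N * (real N - 1))"
  have NM: "real N * (real N - 1) = (M+1)*M" by (simp add: M_def)
  have c0p: "c0 > 0" using M2 by (simp add: c0_def NM)
  have c02: "c0^2 = 1/((M+1)*M)" using M2 by (simp add: c0_def NM power_divide)
  define y where "y = 1 - M*k"
  have y0: "0 < y" and y1: "y \<le> 1" using kp M2 by (auto simp: y_def field_simps)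
  have Mk: "M*k < 1" "0 \<le> M*k" using kp M2 by (auto simp: field_simps)
  have k12: "k \<le> 1/2" using kp M2 by (smt (verit) frac_le)
  have my: "m*y \<le> 2*M"
  proof -
    have "(M+m)*(1-k)*y = M" using kp(1) by (simp add: y_def)
    moreover have "(M+m)*(1/2)*y \<le> (M+m)*(1-k)*y"
      using k12 y0 M2 m1' by (intro mult_right_mono mult_left_mono) auto
    ultimately have "(M+m)*y \<le> 2*M" by simp
    moreover have "(M+m)*y = M*y + m*y" by (simp add: distrib_right)
    moreover have "0 \<le> M*y" using M2 y0 by simp
    ultimately show ?thesis by linarith
  qed
  have my2: "m*y^2 \<le> 2*M"
  proof -
    have "m*y^2 \<le> m*y" using y0 y1 m1' by (simp add: power2_eq_square mult_left_le)
    thus ?thesis using my by simp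
  qed
  define n2 where "n2 = nrm M m (uR M m)"
  have n2e: "n2 = 2*M*(1 - M*k/2)^2 + M*(M-1) + 2*m*(y/2)^2"
    by (simp add: n2_def nrm_def uR_def k_def y_def algebra_simps)
  have a1: "(1 - M*k/2)^2 \<le> 1" using Mk by (simp add: abs_le_square_iff[symmetric] power_le_one_iff)
  have n2lo: "M*(M-1) \<le> n2" using n2e M2 m1' by (simp add: add_nonneg_nonneg)
  have n2hi: "n2 \<le> M*(M+2)"
  proof -
    have "2*M*(1 - M*k/2)^2 \<le> 2*M" using a1 M2 by (simp add: mult_left_le)
    moreover have "2*m*(y/2)^2 \<le> M" using my2 by (simp add: power_divide)
    ultimately show ?thesis using n2e by (simp add: algebra_simps)
  qed
  have n20: "0 \<le> n2"
  proof -
    have "0 \<le> M*(M-1)" using M2 by simp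
    thus ?thesis using n2lo by linarith
  qed
  define q where "q = c0 * sqrt n2"
  have q2: "q^2 = c0^2 * n2" using n20 by (simp add: q_def power_mult_distrib)
  have q0: "0 \<le> q" using c0p n20 by (simp add: q_def)
  have q2e: "q^2 = n2/((M+1)*M)" unfolding q2 c02 by simp
  have q2lo: "(M-1)/(M+1) \<le> q^2"
  proof -
    have "(M-1)/(M+1) = (M*(M-1))/((M+1)*M)" using M2 Mnz Mpos by (simp add: field_simps)
    also have "\<dots> \<le> n2/((M+1)*M)" using n2lo M2 by (intro divide_right_mono) auto
    finally show ?thesis unfolding q2e .
  qed
  have q2hi: "q^2 \<le> (M+2)/(M+1)"
  proof -
    have "n2/((M+1)*M) \<le> (M*(M+2))/((M+1)*M)" using n2hi M2 by (intro divide_right_mono) auto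
    also have "\<dots> = (M+2)/(M+1)" using M2 Mnz Mpos by (simp add: field_simps)
    finally show ?thesis unfolding q2e .
  qed
  have q2b: "\<bar>q^2 - 1\<bar> \<le> 2/(M+1)"
  proof -
    have "(M-1)/(M+1) = 1 - 2/(M+1)" "(M+2)/(M+1) = 1 + 1/(M+1)" using M2 Mnz by (simp_all add: field_simps)
    moreover have "1/(M+1) \<le> 2/(M+1)" using M2 by (simp add: divide_right_mono)
    ultimately show ?thesis using q2lo q2hi by linarith
  qed
  have qb: "\<bar>q - 1\<bar> \<le> 2/(M+1)"
  proof -
    have "q^2 - 1 = (q - 1)*(q + 1)" by (simp add: power2_eq_square algebra_simps)
    hence "\<bar>q^2 - 1\<bar> = \<bar>q - 1\<bar> * \<bar>q + 1\<bar>" by (simp add: abs_mult)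
    hence "\<bar>q^2 - 1\<bar> = \<bar>q - 1\<bar> * (q + 1)" using q0 by simp
    moreover have "\<bar>q - 1\<bar> \<le> \<bar>q - 1\<bar> * (q + 1)" using q0 by (simp add: mult_le_cancel_left1)
    ultimately show ?thesis using q2b by linarith
  qed
  have q2': "q \<le> 2"
  proof -
    have "(M+2)/(M+1) \<le> 2" using Mpos by (simp add: divide_le_eq)
    hence "q^2 \<le> 2^2" using q2hi by simp
    thus ?thesis by (rule power2_le_imp_le) simp
  qed
  define r0 :: v5 where "r0 = (c0*(M*k/2), c0*(M*k/2), 0, -(c0*(y/2)), -(c0*(y/2)))"
  have init: "(c0,c0,c0,0,0) = vlin c0 (uR M m) 1 r0"
    by (simp add: vlin_def uR_def r0_def k_def y_def algebra_simps)
  have nr0: "nrm M m r0 \<le> 2/M"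
  proof -
    have "nrm M m r0 = c0^2 * (2*M*(M*k/2)^2 + 2*m*(y/2)^2)"
      by (simp add: nrm_def r0_def power2_eq_square algebra_simps)
    also have "\<dots> \<le> c0^2 * (M/2 + M)"
    proof -
      have "(M*k/2)^2 \<le> (1/2)^2" using Mk by (intro power_mono) auto
      hence "2*M*(M*k/2)^2 \<le> 2*M*(1/2)^2" using M2 by (intro mult_left_mono) auto
      hence "2*M*(M*k/2)^2 \<le> M/2" by (simp add: power2_eq_square)
      moreover have "2*m*(y/2)^2 \<le> M" using my2 by (simp add: power_divide)
      ultimately show ?thesis by (intro mult_left_mono) auto
    qed
    also have "\<dots> = 3/(2*(M+1))" using M2 using Mnz unfolding c02 by (simp add: field_simps)
    also have "\<dots> \<le> 2/M" using M2 Mnz Mpos by (simp add: field_simps)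
    finally show ?thesis .
  qed
  have Mp: "M > 0" "M + m > 0" using M2 m1' by auto
  have Mnn: "0 \<le> M" "0 \<le> m" "1 \<le> M" using M2 m1' by auto
  have st: "st N mm t = vlin c0 (vlin cc (uR M m) (- ss) (uI M m)) 1 ((stp M m ^^ t) r0)"
  proof -
    have "st N mm t = (stp M m ^^ t) (c0,c0,c0,0,0)" by (simp add: st_def M_def m_def c0_def)
    also have "\<dots> = vlin c0 ((stp M m ^^ t) (uR M m)) 1 ((stp M m ^^ t) r0)"
      unfolding init by (rule stp_pow_lin)
    also have "(stp M m ^^ t) (uR M m) = vlin cc (uR M m) (- ss) (uI M m)"
      using mode[OF modes(1,2)[OF M2 m1']] by (simp add: cc_def ss_def tt_def)
    finally show ?thesis .
  qed
  define wR where "wR = wv M m (uR M m)"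
  define wI where "wI = wv M m (uI M m)"
  define wT where "wT = wv M m ((stp M m ^^ t) r0)"
  have wst: "wv M m (st N mm t) = of_real c0 * (of_real cc * wR + of_real (- ss) * wI) + wT"
    by (simp add: st wv_lin wR_def wI_def wT_def)
  have pr: "sqrt (prob N mm t 0) = cmod (wv M m (st N mm t))"
  proof -
    obtain A B C D E where v: "st N mm t = (A,B,C,D,E)" by (cases "st N mm t") auto
    have "prob N mm t 0 = M*A^2 + m*E^2" using N3 by (simp add: prob_eq v M_def m_def)
    moreover have "cmod (wv M m (st N mm t)) = sqrt (M*A^2 + m*E^2)" using Mnn by (simp add: v cmod_wv)
    ultimately show ?thesis by simp
  qed
  have wIe: "cmod wI = sqrt (n2/2)"
  proof -
    have "cmod wI = sqrt (M*(M * sin (th M m)/2)^2 + m*(- d2 M m)^2)"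
      using Mnn by (simp add: wI_def uI_def cmod_wv)
    thus ?thesis using modes(3)[OF M2 m1'] by (simp add: n2_def)
  qed
  have wRb: "cmod wR \<le> sqrt n2" using wv_le[OF Mnn(3) Mnn(2)] by (simp add: wR_def n2_def)
  have wTb: "cmod wT \<le> sqrt (2/M)"
  proof -
    have "cmod wT \<le> sqrt (nrm M m ((stp M m ^^ t) r0))" using wv_le[OF Mnn(3) Mnn(2)] by (simp add: wT_def)
    also have "\<dots> = sqrt (nrm M m r0)" using nrm_pow[OF Mp] by simp
    also have "\<dots> \<le> sqrt (2/M)" using nr0 by simp
    finally show ?thesis .
  qed
  define T where "T = - (of_real c0 * wI)"
  have cT: "cmod T = q / sqrt 2" using c0p by (simp add: T_def wIe q_def norm_mult real_sqrt_divide)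
  have diff: "wv M m (st N mm t) - T = of_real (c0*cc) * wR + of_real (c0*(1-ss)) * wI + wT"
    by (simp add: wst T_def algebra_simps)
  have db: "cmod (wv M m (st N mm t) - T) \<le> c0* si* sqrt n2 + c0*k* sqrt n2 + sqrt (2/M)"
  proof -
    have "cmod (wv M m (st N mm t) - T) \<le> cmod (of_real (c0*cc) * wR) + cmod (of_real (c0*(1-ss)) * wI) + cmod wT"
      unfolding diff by (rule order_trans[OF norm_triangle_ineq add_right_mono[OF norm_triangle_ineq]])
    also have "cmod (of_real (c0*cc) * wR) \<le> c0* si* sqrt n2"
    proof -
      have "cmod (of_real (c0*cc) * wR) = c0 * \<bar>cc\<bar> * cmod wR" using c0p by (simp add: norm_mult abs_mult)
      also have "\<dots> \<le> c0 * si * sqrt n2" using c0p tb(1) wRb si0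
        by (intro mult_mono mult_left_mono) auto
      finally show ?thesis .
    qed
    also have "cmod (of_real (c0*(1-ss)) * wI) \<le> c0*k* sqrt n2"
    proof -
      have "sqrt (n2/2) \<le> sqrt n2" using n20 by simp
      hence wIb: "cmod wI \<le> sqrt n2" using wIe by simp
      have "cmod (of_real (c0*(1-ss)) * wI) = c0 * \<bar>1-ss\<bar> * cmod wI" unfolding norm_mult norm_of_real abs_mult using c0p by simp
      also have "\<dots> \<le> c0 * k * sqrt n2" using c0p tb(2) wIb kp(2)
        by (intro mult_mono mult_left_mono) auto
      finally show ?thesis .
    qed
    finally show ?thesis using wTb by simp
  qed
  have sib: "si \<le> sqrt (2/M)"
  proof -
    have e1: "k*(2-k) = 2*k - k^2" by (simp add: power2_eq_square algebra_simps)
    have e2: "0 \<le> k^2" by simp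
    have e3: "2*k \<le> 2*(1/M)" using kp(3) by simp
    have "si^2 \<le> 2*(1/M)" using si2 e1 e2 e3 by linarith
    hence "si^2 \<le> 2/M" by simp
    thus ?thesis using si0 by (metis real_le_rsqrt)
  qed
  have kb: "k \<le> 1/M" using kp by simp
  define r where "r = 1 / sqrt M"
  have r2: "r^2 = 1/M" using M2 by (simp add: r_def power_divide)
  have r0': "0 < r" using M2 by (simp add: r_def)
  have rb: "r \<le> 3/4"
  proof -
    have h1: "1/M \<le> 1/2" by (rule divide_left_mono) (use M2 in auto)
    have h2: "(3/4::real)^2 = 9/16" by (simp add: power2_eq_square)
    have "r^2 \<le> (3/4)^2" using r2 h1 h2 by linarith
    thus ?thesis by (rule power2_le_imp_le) simp
  qed
  have s2: "sqrt 2 \<le> 3/2"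
  proof -
    have "sqrt 2 \<le> sqrt ((3/2)^2)" by (rule real_sqrt_le_mono) (simp add: power2_eq_square)
    thus ?thesis by simp
  qed
  have sq2M: "sqrt (2/M) = sqrt 2 * r" by (simp add: r_def real_sqrt_divide)
  have "\<bar>sqrt (prob N mm t 0) - 1 / sqrt 2\<bar> \<le> \<bar>cmod (wv M m (st N mm t)) - cmod T\<bar> + \<bar>cmod T - 1/sqrt 2\<bar>"
    unfolding pr by linarith
  also have "\<bar>cmod (wv M m (st N mm t)) - cmod T\<bar> \<le> q* si + q*k + sqrt (2/M)"
    using order_trans[OF norm_triangle_ineq3 db] by (simp add: q_def algebra_simps)
  also have "\<bar>cmod T - 1/sqrt 2\<bar> = \<bar>q - 1\<bar> / sqrt 2" unfolding cT
    by (simp add: diff_divide_distrib[symmetric])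
  also have "\<dots> \<le> \<bar>q - 1\<bar>"
  proof -
    have "(1::real) \<le> sqrt 2" by simp
    from mult_left_mono[OF this, of "\<bar>q - 1\<bar>"] show ?thesis by (simp add: divide_le_eq)
  qed
  also have "q* si + q*k + sqrt (2/M) + \<bar>q - 1\<bar> \<le> 2*(sqrt 2 * r) + 2*r^2 + sqrt 2 * r + 2*r^2"
  proof -
    have si': "si \<le> sqrt 2 * r" using sib sq2M by simp
    have "q* si \<le> 2*(sqrt 2 * r)" by (rule mult_mono[OF q2' si']) (use si0 in auto)
    moreover have kr: "k \<le> r^2" using kb r2 by simp
    have "q*k \<le> 2*r^2" by (rule mult_mono[OF q2' kr]) (use kp(2) in auto)
    moreover have "2/(M+1) \<le> 2*r^2"
    proof -
      have "2/(M+1) \<le> 2/M" by (rule divide_left_mono) (use M2 in auto)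
      thus ?thesis using r2 by simp
    qed
    ultimately show ?thesis using qb sq2M by linarith
  qed
  also have "\<dots> \<le> 10 * r"
  proof -
    have "2*(sqrt 2 * r) + sqrt 2 * r \<le> 3*(3/2)*r" using s2 r0' by (simp add: algebra_simps mult_right_mono)
    moreover have "4*r^2 \<le> 3*r" using rb r0' by (simp add: power2_eq_square mult_right_mono)
    ultimately show ?thesis using r0' by linarith
  qed
  also have "10 * r = 10 / sqrt (real N - 1)" by (simp add: r_def M_def)
  finally show ?thesis by (simp add: t_def tt_def M_def m_def)
qed



lemma prob_nonneg: "prob N m t v \<ge> 0"
  unfolding prob_def by (intro sum_nonneg) simp

theorem theorem1:
  fixes \<alpha> :: real
  assumes "\<alpha> \<ge> 0"
  shows "\<exists>t_opt :: nat \<Rightarrow> nat.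
           (\<lambda>N. prob N (nat \<lfloor>real N powr \<alpha>\<rfloor>) (t_opt N) vstar) \<longlonglongrightarrow> 1 / 2"
proof -
  define mf where "mf N = nat \<lfloor>real N powr \<alpha>\<rfloor>" for N :: nat
  define topt where "topt N = nat \<lfloor>pi / (2 * th (real N - 1) (real (mf N)))\<rfloor>" for N :: nat
  define P where "P N = prob N (mf N) (topt N) 0" for N :: nat
  have mf1: "mf N \<ge> 1" if "N \<ge> 1" for N
  proof -
    have "1 \<le> real N powr \<alpha>" using that assms by (intro ge_one_powr_ge_zero) auto
    hence f: "(1::int) \<le> \<lfloor>real N powr \<alpha>\<rfloor>" by simp
    show ?thesis unfolding mf_def using nat_mono[OF f] by simp
  qed
  have ev: "eventually (\<lambda>N. norm (sqrt (P N) - 1 / sqrt 2) \<le> 10 / sqrt (real N - 1)) sequentially"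
  proof (rule eventually_sequentiallyI[of 3])
    fix N :: nat assume N: "N \<ge> 3"
    show "norm (sqrt (P N) - 1 / sqrt 2) \<le> 10 / sqrt (real N - 1)"
      using main_est[OF N mf1] N by (simp add: P_def topt_def)
  qed
  have g0: "(\<lambda>N::nat. 10 / sqrt (real N - 1)) \<longlonglongrightarrow> 0" by real_asymp
  have "(\<lambda>N. sqrt (P N) - 1 / sqrt 2) \<longlonglongrightarrow> 0" by (rule Lim_null_comparison[OF ev g0])
  hence "(\<lambda>N. sqrt (P N)) \<longlonglongrightarrow> 1 / sqrt 2" by (rule LIM_zero_cancel)
  hence "(\<lambda>N. (sqrt (P N))^2) \<longlonglongrightarrow> (1 / sqrt 2)^2" by (rule tendsto_power)
  moreover have "(\<lambda>N. (sqrt (P N))^2) = P" using prob_nonneg by (auto simp: P_def)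
  moreover have "(1 / sqrt 2 :: real)^2 = 1/2" by (simp add: power_divide)
  ultimately have "P \<longlonglongrightarrow> 1/2" by simp
  have "(\<lambda>N. prob N (nat \<lfloor>real N powr \<alpha>\<rfloor>) (topt N) vstar) \<longlonglongrightarrow> 1 / 2"
  proof -
    have Peq: "P = (\<lambda>N. prob N (nat \<lfloor>real N powr \<alpha>\<rfloor>) (topt N) vstar)"
      by (rule ext) (simp add: P_def mf_def vstar_def)
    show ?thesis using \<open>P \<longlonglongrightarrow> 1/2\<close> unfolding Peq .
  qed
  thus ?thesis by blast
qed

end
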